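(* Let $n\ge2$ be an integer and let $\Gamma(0;n)$ be the group of automorphisms of the Farey tessellation generated by the reflections in all Farey edges having $\infty$ as an endpoint (i.e. the maps $z\mapsto 2k-\bar z$, $k\in\mathbb{Z}$) together with the parabolic transformation $z\mapsto z/(2nz+1)$ centered at $0$ (translation by $2n$ units around the vertex $0$). Then for every $s\in\mathbb{Q}\cup\{\infty\}$ there is a unique $s_0\in([1/n,1]\cap\mathbb{Q})\cup\{\infty,0\}$ such that $s$ lies in the $\Gamma(0;n)$-orbit of $s_0$.
   Context: The Farey tessellation of the upper half plane $\mathbb{H}^2$ is the ideal triangulation whose vertices are $\mathbb{Q}\cup\{\infty\}$, with $p/q$ and $r/s$ (in lowest terms, $\infty=1/0$) joined by a geodesic edge iff $|ps-qr|=1$. $\Gamma(0;n)$ acts on $\partial\mathbb{H}^2=\mathbb{R}\cup\{\infty\}$ and preserves $\mathbb{Q}\cup\{\infty\}$. *)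

theory Defs
  imports Main "HOL.Rat"
begin

datatype extrat = Fin rat | Infty

text \<open>Reflection in the Farey edge from infinity to k (restricted to the boundary):
  z maps to 2k - conj z, i.e. x maps to 2k - x on Q, infinity fixed.\<close>
fun farey_refl :: "int \<Rightarrow> extrat \<Rightarrow> extrat" where
  "farey_refl k (Fin x) = Fin (2 * of_int k - x)"
| "farey_refl k Infty = Infty"

fun parab :: "int \<Rightarrow> extrat \<Rightarrow> extrat" where
  "parab n (Fin x) = (if 2 * of_int n * x + 1 = 0 then Infty
                      else Fin (x / (2 * of_int n * x + 1)))"
| "parab n Infty = Fin (1 / (2 * of_int n))"

fun parab_inv :: "int \<Rightarrow> extrat \<Rightarrow> extrat" where
  "parab_inv n (Fin x) = (if 1 - 2 * of_int n * x = 0 then Infty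
                          else Fin (x / (1 - 2 * of_int n * x)))"
| "parab_inv n Infty = Fin (- 1 / (2 * of_int n))"

inductive_set gamma0 :: "int \<Rightarrow> (extrat \<Rightarrow> extrat) set" for n :: int where
  gid: "id \<in> gamma0 n"
| grefl: "g \<in> gamma0 n \<Longrightarrow> farey_refl k \<circ> g \<in> gamma0 n"
| gpar: "g \<in> gamma0 n \<Longrightarrow> parab n \<circ> g \<in> gamma0 n"
| gparinv: "g \<in> gamma0 n \<Longrightarrow> parab_inv n \<circ> g \<in> gamma0 n"

definition orbit0 :: "int \<Rightarrow> extrat \<Rightarrow> extrat set" where
  "orbit0 n s = {g s | g. g \<in> gamma0 n}"

definition fund_set :: "int \<Rightarrow> extrat set" where
  "fund_set n = {Fin q | q. 1 / of_int n \<le> q \<and> q \<le> 1} \<union> {Infty, Fin 0}"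

end

theory Submission
  imports Defs
begin

definition rho :: "rat \<Rightarrow> rat" where
  "rho x = (let y = x - 2 * of_int \<lfloor>x/2\<rfloor> in if y \<le> 1 then y else 2 - y)"

lemma rho_props: "0 \<le> rho x \<and> rho x \<le> 1 \<and> (\<exists>j::int. x = rho x + 2 * of_int j \<or> x = 2 * of_int j - rho x)"
proof -
  define f where "f = \<lfloor>x/2\<rfloor>"
  have a: "of_int f \<le> x/2" "x/2 < of_int f + 1" using floor_correct[of "x/2"] unfolding f_def by auto
  show ?thesis
  proof (cases "x - 2 * of_int f \<le> 1")
    case True
    then have "rho x = x - 2 * of_int f" unfolding rho_def f_def Let_def by simp
    then show ?thesis using a True by (intro conjI exI[of _ f]) auto
  next
    case False
    then have "rho x = 2 - (x - 2 * of_int f)" unfolding rho_def f_def Let_def by simp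
    then show ?thesis using a False by (intro conjI exI[of _ "f+1"]) auto
  qed
qed

lemma int_small: "2 * (of_int (j::int) :: rat) \<le> 1 \<Longrightarrow> -1 \<le> 2 * (of_int j :: rat) \<Longrightarrow> j = 0"
proof -
  assume h: "2 * (of_int (j::int) :: rat) \<le> 1" "-1 \<le> 2 * (of_int j :: rat)"
  have "j < 1"
  proof (rule ccontr)
    assume "\<not> j < 1" then have "(of_int j :: rat) \<ge> 1" by simp
    then show False using h by simp
  qed
  moreover have "j > -1"
  proof (rule ccontr)
    assume "\<not> j > -1" then have "(of_int j :: rat) \<le> -1" by simp
    then show False using h by simp
  qed
  ultimately show ?thesis by simp
qed

lemma int_01: "0 \<le> 2 * (of_int (k::int) :: rat) \<Longrightarrow> 2 * (of_int k :: rat) \<le> 2 \<Longrightarrow> k = 0 \<or> k = 1"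
proof -
  assume h: "0 \<le> 2 * (of_int (k::int) :: rat)" "2 * (of_int k :: rat) \<le> 2"
  have "k \<le> 1"
  proof (rule ccontr)
    assume "\<not> k \<le> 1" then have "(of_int k :: rat) \<ge> 2" by simp
    then show False using h by simp
  qed
  moreover have "k \<ge> 0"
  proof (rule ccontr)
    assume "\<not> k \<ge> 0" then have "(of_int k :: rat) \<le> -1" by simp
    then show False using h by simp
  qed
  ultimately show ?thesis by linarith
qed

lemma rho_unique:
  assumes z: "0 \<le> z" "z \<le> 1" and j: "x = z + 2 * of_int j \<or> x = 2 * of_int j - z"
  shows "rho x = z"
proof -
  obtain i where i: "x = rho x + 2 * of_int i \<or> x = 2 * of_int i - rho x"
    and r: "0 \<le> rho x" "rho x \<le> 1" using rho_props by blast
  consider "rho x - z = 2 * of_int (j - i)" | "rho x + z = 2 * of_int (j - i)"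
    | "rho x + z = 2 * of_int (i - j)" | "rho x - z = 2 * of_int (i - j)"
    using i j by (auto simp: algebra_simps)
  then show ?thesis
  proof cases
    case 1 then have "j - i = 0" using r z by (intro int_small) linarith+
    then show ?thesis using 1 by simp
  next
    case 2
    then have "j - i = 0 \<or> j - i = 1" using r z by (intro int_01) linarith+
    then show ?thesis using 2 r z by (auto; linarith)
  next
    case 3
    then have "i - j = 0 \<or> i - j = 1" using r z by (intro int_01) linarith+
    then show ?thesis using 3 r z by (auto; linarith)
  next
    case 4 then have "i - j = 0" using r z by (intro int_small) linarith+
    then show ?thesis using 4 by simp
  qed
qed

lemma rho_refl: "rho (2 * of_int k - x) = rho x"
proof -
  obtain j where j: "x = rho x + 2 * of_int j \<or> x = 2 * of_int j - rho x"
    and r: "0 \<le> rho x" "rho x \<le> 1" using rho_props by blast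
  have "2 * of_int k - x = rho x + 2 * of_int (k - j) \<or> 2 * of_int k - x = 2 * of_int (k - j) - rho x"
    using j by (auto simp: algebra_simps)
  then show ?thesis using r by (intro rho_unique[where j="k-j"]) auto
qed

lemma rho_id: "0 \<le> x \<Longrightarrow> x \<le> 1 \<Longrightarrow> rho x = x"
  by (rule rho_unique[where j=0]) auto

definition den :: "rat \<Rightarrow> nat" where
  "den x = (LEAST b::nat. 0 < b \<and> of_nat b * x \<in> \<int>)"

lemma den_ex: "\<exists>b::nat. 0 < b \<and> of_nat b * (x::rat) \<in> \<int>"
proof -
  obtain a d where q: "quotient_of x = (a, d)" by (cases "quotient_of x") auto
  have d: "d > 0" using quotient_of_denom_pos[OF q] .
  have x: "x = of_int a / of_int d" using quotient_of_div[OF q] .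
  have "of_nat (nat d) * x = of_int a" using d x by simp
  then show ?thesis using d by (intro exI[of _ "nat d"]) auto
qed

lemma den_le: "0 < b \<Longrightarrow> of_nat b * x \<in> \<int> \<Longrightarrow> den x \<le> b"
  unfolding den_def by (rule Least_le) auto

lemma den_prop: "0 < den x \<and> of_nat (den x) * x \<in> \<int>"
  unfolding den_def using den_ex[of x] by (rule LeastI_ex)

lemma den_decr:
  assumes y: "0 < y" "y < 1 / of_int n" and ne: "2 * of_int n * y - 1 \<noteq> 0"
  shows "den (rho (y / (2 * of_int n * y - 1))) < den y"
proof -
  have n: "n > 0"
  proof (rule ccontr)
    assume "\<not> n > 0" then have "(of_int n :: rat) \<le> 0" by simp
    then have h: "1 / (of_int n :: rat) \<le> 0" by (simp add: divide_le_0_iff)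
    show False using y h by linarith
  qed
  have ny: "of_int n * y < 1" using y n by (simp add: field_simps)
  define q where "q = den y"
  obtain p where p: "of_nat q * y = of_int p" using den_prop[of y] unfolding q_def
    by (auto elim: Ints_cases)
  have q0: "q > 0" using den_prop[of y] unfolding q_def by simp
  define w where "w = y / (2 * of_int n * y - 1)"
  define m where "m = 2 * n * p - int q"
  have pm: "(of_int m :: rat) = of_nat q * (2 * of_int n * y - 1)"
    unfolding m_def using p by (simp add: algebra_simps)
  have wm: "w * of_int m = of_int p" unfolding w_def pm using ne p by (simp add: field_simps)
  have "of_int m \<noteq> (0::rat)" using pm ne q0 by simp
  then have m0: "m \<noteq> 0" by simp
  have "(of_int p :: rat) > 0" using p[symmetric] q0 y by simp
  have nyp: "of_int n * y > 0" using n y by simp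
  have t1: "2 * of_int n * y - 1 < 1" "-1 < 2 * of_int n * y - 1" using ny nyp by linarith+
  have Q: "(of_nat q :: rat) > 0" using q0 by simp
  have "of_nat q * (2 * of_int n * y - 1) < of_nat q * (1::rat)"
    by (rule mult_strict_left_mono[OF t1(1) Q])
  moreover have "of_nat q * (-1) < of_nat q * (2 * of_int n * y - (1::rat))"
    by (rule mult_strict_left_mono[OF t1(2) Q])
  ultimately have "(of_int m :: rat) < of_nat q" "- of_nat q < (of_int m :: rat)"
    unfolding pm by simp_all
  then have mq: "\<bar>m\<bar> < int q" by linarith
  obtain j where j: "w = rho w + 2 * of_int j \<or> w = 2 * of_int j - rho w" using rho_props by blast
  have "rho w * of_int m \<in> \<int>"
  proof -
    have "rho w = w - 2 * of_int j \<or> rho w = 2 * of_int j - w" using j by auto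
    then show ?thesis
    proof
      assume e: "rho w = w - 2 * of_int j"
      have "rho w * of_int m = w * of_int m - 2 * of_int j * of_int m" unfolding e by (simp add: algebra_simps)
      then have "rho w * of_int m = of_int (p - 2 * j * m)" unfolding wm by simp
      then show ?thesis by simp
    next
      assume e: "rho w = 2 * of_int j - w"
      have "rho w * of_int m = 2 * of_int j * of_int m - w * of_int m" unfolding e by (simp add: algebra_simps)
      then have "rho w * of_int m = of_int (2 * j * m - p)" unfolding wm by simp
      then show ?thesis by simp
    qed
  qed
  then have "of_nat (nat \<bar>m\<bar>) * rho w \<in> \<int>"
    by (cases "m \<ge> 0") (auto simp: mult.commute elim!: Ints_cases intro!: Ints_minus)
  then have "den (rho w) \<le> nat \<bar>m\<bar>" using m0 by (intro den_le) auto
  then show ?thesis using mq unfolding w_def q_def by linarith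
qed

function H :: "int \<Rightarrow> rat \<Rightarrow> extrat" where
  "H n y = (if 0 < y \<and> y < 1 / of_int n then
      (if 2 * of_int n * y - 1 = 0 then Infty else H n (rho (y / (2 * of_int n * y - 1))))
    else Fin y)"
  by auto
termination
  by (relation "measure (\<lambda>(n, y). den y)") (auto intro: den_decr)

declare H.simps[simp del]

lemma H_else: "\<not> (0 < y \<and> y < 1 / of_int n) \<Longrightarrow> H n y = Fin y"
  by (subst H.simps) (simp only: if_not_P if_False)

lemma H_inf: "0 < y \<and> y < 1 / of_int n \<Longrightarrow> 2 * of_int n * y - 1 = 0 \<Longrightarrow> H n y = Infty"
  by (subst H.simps) (simp only: if_P if_True)

lemma H_rec: "0 < y \<and> y < 1 / of_int n \<Longrightarrow> 2 * of_int n * y - 1 \<noteq> 0 \<Longrightarrow>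
   H n y = H n (rho (y / (2 * of_int n * y - 1)))"
  by (subst H.simps) (simp only: if_P if_not_P if_True if_False)

fun F :: "int \<Rightarrow> extrat \<Rightarrow> extrat" where
  "F n Infty = Infty"
| "F n (Fin x) = H n (rho x)"

fun cc :: "int \<Rightarrow> extrat \<Rightarrow> extrat" where
  "cc n (Fin x) = (if 2 * of_int n * x - 1 = 0 then Infty else Fin (x / (2 * of_int n * x - 1)))"
| "cc n Infty = Fin (1 / (2 * of_int n))"

lemma parab_eq: "parab n s = cc n (farey_refl 0 s)"
proof (cases s)
  case (Fin x)
  have "(2 * of_int n * x + 1 = 0) = (2 * of_int n * (- x) - 1 = 0)" by (auto simp: algebra_simps)
  moreover have "2 * of_int n * x + 1 \<noteq> 0 \<Longrightarrow> x / (2 * of_int n * x + 1) = - x / (2 * of_int n * (- x) - 1)"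
    by (simp add: field_simps)
  ultimately show ?thesis using Fin by auto
qed simp

lemma parab_inv_eq: "parab_inv n s = farey_refl 0 (cc n s)"
proof (cases s)
  case (Fin x)
  have "(1 - 2 * of_int n * x = 0) = (2 * of_int n * x - 1 = 0)" by (auto simp: algebra_simps)
  moreover have "1 - 2 * of_int n * x \<noteq> 0 \<Longrightarrow> x / (1 - 2 * of_int n * x) = - (x / (2 * of_int n * x - 1))"
    by (simp add: field_simps)
  ultimately show ?thesis using Fin by auto
qed simp

lemma refl_refl: "farey_refl k (farey_refl k s) = s"
  by (cases s) auto

lemma cc_cc: assumes "n \<noteq> 0" shows "cc n (cc n s) = s"
proof (cases s)
  case (Fin x)
  show ?thesis
  proof (cases "2 * of_int n * x - 1 = 0")
    case True
    then have "x = 1 / (2 * of_int n)" using assms by (simp add: field_simps)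
    then show ?thesis using Fin True by simp
  next
    case False
    define w where "w = x / (2 * of_int n * x - 1)"
    have e: "2 * of_int n * w - 1 = 1 / (2 * of_int n * x - 1)"
      unfolding w_def using False by (simp add: field_simps)
    then have "2 * of_int n * w - 1 \<noteq> 0" using False by simp
    moreover have "w / (2 * of_int n * w - 1) = x" unfolding e unfolding w_def using False by simp
    ultimately show ?thesis using Fin False by (simp add: w_def[symmetric])
  qed
next
  case Infty
  then show ?thesis using assms by simp
qed

lemma cc_eq: "n \<noteq> 0 \<Longrightarrow> cc n s = farey_refl 0 (parab_inv n s)"
  by (simp add: parab_inv_eq refl_refl)

lemma F_refl: "F n (farey_refl k s) = F n s"
  by (cases s) (auto simp: rho_refl)

lemma K: assumes n: "n \<ge> 1" and y: "0 < y" "y < 1 / of_int n"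
  shows "F n (Fin y) = F n (cc n (Fin y))"
proof -
  have "1 / of_int n \<le> (1::rat)" using n by simp
  then have "rho y = y" using y by (intro rho_id) auto
  then show ?thesis using y by (cases "2 * of_int n * y - 1 = 0") (simp_all add: H_inf H_rec)
qed

lemma F_cc: assumes n: "n \<ge> 1" shows "F n (cc n s) = F n s"
proof -
  have nz: "n \<noteq> 0" using n by simp
  have np: "(of_int n :: rat) \<ge> 1" using n by simp
  have C: "F n (cc n s) = F n s" if "s = Fin y" "0 < y" "y < 1 / of_int n" for s y
    using K[OF n that(2,3)] that(1) by simp
  show ?thesis
  proof (cases s)
    case Infty
    have a: "0 < 1 / (2 * of_int n :: rat)" "1 / (2 * of_int n) < 1 / (of_int n :: rat)"
      using np by (simp_all add: field_simps)
    have "cc n (Fin (1 / (2 * of_int n))) = Infty" using nz by simp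
    then show ?thesis using K[OF n a] Infty by simp
  next
    case (Fin x)
    consider "0 < x \<and> x < 1 / of_int n" | "x = 0" | "x = 1 / of_int n" | "x < 0" | "x > 1 / of_int n"
      by linarith
    then show ?thesis
    proof cases
      case 1 then show ?thesis using C Fin by blast
    next
      case 2 then show ?thesis using Fin by simp
    next
      case 3 then show ?thesis using Fin nz by simp
    next
      case 4
      have "of_int n * x < 0" using np 4 by (simp add: mult_pos_neg)
      then have d: "2 * of_int n * x - 1 < 0" by linarith
      define w where "w = x / (2 * of_int n * x - 1)"
      have w: "0 < w" "w < 1 / of_int n" unfolding w_def using d 4 np
        by (simp_all add: field_simps divide_neg_neg)
      have "cc n (Fin x) = Fin w" using d w_def by simp
      moreover have "cc n (Fin w) = Fin x" using cc_cc[OF nz, of "Fin x"] d w_def by simp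
      ultimately show ?thesis using C[of "Fin w" w] w Fin by simp
    next
      case 5
      then have nx: "of_int n * x > 1" using np by (simp add: field_simps)
      then have d: "2 * of_int n * x - 1 > 0" by simp
      define w where "w = x / (2 * of_int n * x - 1)"
      have "0 < 1 / (of_int n :: rat)" using np by simp
      then have xp: "x > 0" using 5 by linarith
      have w: "0 < w" "w < 1 / of_int n" unfolding w_def using d 5 np nx xp
        by (simp_all add: field_simps)
      have "cc n (Fin x) = Fin w" using d w_def by simp
      moreover have "cc n (Fin w) = Fin x" using cc_cc[OF nz, of "Fin x"] d w_def by simp
      ultimately show ?thesis using C[of "Fin w" w] w Fin by simp
    qed
  qed
qed

lemma F_gamma: assumes "n \<ge> 1" "g \<in> gamma0 n" shows "F n (g s) = F n s"
  using assms(2)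
proof (induction rule: gamma0.induct)
  case gid then show ?case by simp
next
  case (grefl g k) then show ?case by (simp add: F_refl)
next
  case (gpar g) then show ?case by (simp add: parab_eq F_cc[OF assms(1)] F_refl)
next
  case (gparinv g) then show ?case by (simp add: parab_inv_eq F_cc[OF assms(1)] F_refl)
qed

lemma orbit_refl: "t \<in> orbit0 n t"
  unfolding orbit0_def by (auto intro!: exI[of _ id] gamma0.gid)

lemma orbit_farey: "s \<in> orbit0 n t \<Longrightarrow> farey_refl k s \<in> orbit0 n t"
  unfolding orbit0_def by (auto intro!: gamma0.grefl) (metis comp_apply gamma0.grefl)

lemma orbit_parinv: "s \<in> orbit0 n t \<Longrightarrow> parab_inv n s \<in> orbit0 n t"
  unfolding orbit0_def by (auto) (metis comp_apply gamma0.gparinv)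

lemma orbit_cc: "n \<noteq> 0 \<Longrightarrow> s \<in> orbit0 n t \<Longrightarrow> cc n s \<in> orbit0 n t"
  by (simp add: cc_eq orbit_farey orbit_parinv)

lemma orbit_rho: "Fin (rho y) \<in> orbit0 n t \<Longrightarrow> Fin y \<in> orbit0 n t"
proof -
  assume a: "Fin (rho y) \<in> orbit0 n t"
  obtain j where j: "y = rho y + 2 * of_int j \<or> y = 2 * of_int j - rho y" using rho_props by blast
  then show ?thesis
  proof
    assume y: "y = rho y + 2 * of_int j"
    have "farey_refl j (farey_refl 0 (Fin (rho y))) = Fin y" by (subst y) simp
    then show ?thesis using a by (metis orbit_farey)
  next
    assume y: "y = 2 * of_int j - rho y"
    have "farey_refl j (Fin (rho y)) = Fin y" by (subst (2) y) simp
    then show ?thesis using a by (metis orbit_farey)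
  qed
qed

lemma H_orbit: "Fin z \<in> orbit0 n (H n z)"
proof (induction n z rule: H.induct)
  case (1 n y)
  show ?case
  proof (cases "0 < y \<and> y < 1 / of_int n")
    case False
    then show ?thesis by (simp add: H_else orbit_refl)
  next
    case True
    have n: "n \<noteq> 0" using True by auto
    show ?thesis
    proof (cases "2 * of_int n * y - 1 = 0")
      case True2: True
      then have "Fin y = cc n Infty" using n by (simp add: field_simps)
      then show ?thesis using True True2 orbit_cc[OF n orbit_refl[of Infty n]]
        by (simp add: H_inf)
    next
      case False
      define w where "w = y / (2 * of_int n * y - 1)"
      have "Fin (rho w) \<in> orbit0 n (H n (rho w))" unfolding w_def by (rule 1[OF True False])
      then have "Fin w \<in> orbit0 n (H n (rho w))" by (rule orbit_rho)
      then have "cc n (Fin w) \<in> orbit0 n (H n (rho w))" by (rule orbit_cc[OF n])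
      moreover have "cc n (Fin w) = Fin y" using cc_cc[OF n, of "Fin y"] False w_def by simp
      ultimately show ?thesis using True False by (simp add: H_rec w_def)
    qed
  qed
qed

lemma H_fund: "0 \<le> z \<Longrightarrow> z \<le> 1 \<Longrightarrow> H n z \<in> fund_set n"
proof (induction n z rule: H.induct)
  case (1 n y)
  show ?case
  proof (cases "0 < y \<and> y < 1 / of_int n")
    case False
    then have "y = 0 \<or> (1 / of_int n \<le> y \<and> y \<le> 1)" using 1 by auto
    then show ?thesis using False by (auto simp: H_else fund_set_def)
  next
    case True
    show ?thesis
    proof (cases "2 * of_int n * y - 1 = 0")
      case True
      then show ?thesis using \<open>0 < y \<and> y < 1 / of_int n\<close> by (simp add: H_inf fund_set_def)
    next
      case False
      define w where "w = y / (2 * of_int n * y - 1)"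
      have r: "0 \<le> rho w" "rho w \<le> 1" using rho_props by auto
      have "H n (rho w) \<in> fund_set n" unfolding w_def
        by (rule 1(1)[OF True False]) (use r in \<open>simp_all add: w_def\<close>)
      then show ?thesis using H_rec[OF True False] w_def by simp
    qed
  qed
qed

lemma F_fund_id: assumes "n \<ge> 1" "s \<in> fund_set n" shows "F n s = s"
proof -
  have "1 / of_int n \<le> (1::rat)" using assms by simp
  moreover have "0 < 1 / (of_int n :: rat)" using assms by simp
  moreover have "H n (rho q) = Fin q" if "1 / of_int n \<le> q" "q \<le> 1" for q
  proof -
    have "0 < 1 / (of_int n :: rat)" using assms by simp
    then have "rho q = q" using that by (intro rho_id) linarith+
    moreover have "\<not> (0 < q \<and> q < 1 / of_int n)" using that by linarith
    ultimately show ?thesis by (simp add: H_else)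
  qed
  moreover have "H n (rho 0) = Fin 0" by (simp add: rho_id H_else)
  ultimately show ?thesis using assms(2) unfolding fund_set_def by auto
qed

theorem theorem2p1:
  fixes n :: int
  assumes "n \<ge> 2"
  shows "\<forall>s. \<exists>!s0. s0 \<in> fund_set n \<and> s \<in> orbit0 n s0"
proof
  fix s
  have n: "n \<ge> 1" using assms by simp
  have ex: "F n s \<in> fund_set n \<and> s \<in> orbit0 n (F n s)"
  proof (cases s)
    case (Fin y)
    then show ?thesis using H_fund[of "rho y" n] rho_props[of y] H_orbit[of "rho y" n] orbit_rho
      by auto
  next
    case Infty
    then show ?thesis by (simp add: fund_set_def orbit_refl)
  qed
  have un: "s0 = F n s" if a1: "s0 \<in> fund_set n" and a2: "s \<in> orbit0 n s0" for s0
  proof -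
    obtain g where g: "g \<in> gamma0 n" "s = g s0" using a2 unfolding orbit0_def by auto
    then have "F n s = F n s0" using F_gamma[OF n] by simp
    then show ?thesis using F_fund_id[OF n a1] by simp
  qed
  show "\<exists>!s0. s0 \<in> fund_set n \<and> s \<in> orbit0 n s0" using ex un by blast
qed

end
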